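(* Let $K_{\alpha\beta}$ be a second order Killing tensor on an arbitrary Riemannian manifold $(M,g)$. Then the third of the Nijenhuis integrability conditions, $$0=N^{\delta}{}_{[\beta\gamma}K_{\alpha]\varepsilon}K^{\varepsilon}{}_{\delta},$$ is redundant, i.e.\ it is implied by the Killing equation together with the first two Nijenhuis conditions $$0=N^{\delta}{}_{[\beta\gamma}g_{\alpha]\delta},\qquad 0=N^{\delta}{}_{[\beta\gamma}K_{\alpha]\delta}.$$ The same holds true on a pseudo-Riemannian manifold.
   Context: A second order Killing tensor is a symmetric tensor field $K_{\alpha\beta}$ satisfying the Killing equation $\nabla_\alpha K_{\beta\gamma}+\nabla_\beta K_{\gamma\alpha}+\nabla_\gamma K_{\alpha\beta}=0$. It is regarded as an endomorphism field $K^{\alpha}{}_{\beta}$ via the metric $g$. Its Nijenhuis torsion is $N(X,Y)=K^2[X,Y]-K[KX,Y]-K[X,KY]+[KX,KY]$, given in local coordinates by $N^{\alpha}{}_{\beta\gamma}=K^{\alpha}{}_{\delta}K^{\delta}{}_{[\beta;\gamma]}+K^{\delta}{}_{[\beta}K^{\alpha}{}_{\gamma];\delta}$, where a semicolon denotes a covariant derivative and square brackets denote antisymmetrisation. The Nijenhuis integrability conditions are the three equations $0=N^{\delta}{}_{[\beta\gamma}g_{\alpha]\delta}$, $0=N^{\delta}{}_{[\beta\gamma}K_{\alpha]\delta}$, $0=N^{\delta}{}_{[\beta\gamma}K_{\alpha]\varepsilon}K^{\varepsilon}{}_{\delta}$; for an endomorphism with simple eigenvalues they are equivalent to integrability (the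 orthogonal complements of each eigenvector field form integrable distributions). The theorem does not assume that the eigenvalues of $K$ are simple. *)

theory Defs
  imports "HOL-Analysis.Analysis"
begin

text \<open>A (pseudo-)Riemannian metric on an open coordinate
  domain U of R^n is a field of symmetric nondegenerate matrices g x, with g x $ a $ b = g_{ab}.\<close>

definition pd :: "(real^'n \<Rightarrow> real) \<Rightarrow> 'n \<Rightarrow> real^'n \<Rightarrow> real" where
  "pd f i x = frechet_derivative f (at x) (axis i 1)"

definition ginv :: "(real^'n \<Rightarrow> real^'n^'n) \<Rightarrow> real^'n \<Rightarrow> real^'n^'n" where
  "ginv g x = matrix_inv (g x)"

definition christoffel :: "(real^'n \<Rightarrow> real^'n^'n) \<Rightarrow> real^'n \<Rightarrow> 'n \<Rightarrow> 'n \<Rightarrow> 'n \<Rightarrow> real" where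
  "christoffel g x a b c = (1/2) * (\<Sum>d\<in>UNIV. ginv g x $ a $ d *
      (pd (\<lambda>y. g y $ d $ c) b x + pd (\<lambda>y. g y $ d $ b) c x - pd (\<lambda>y. g y $ b $ c) d x))"

text \<open>Covariant derivative of a covariant 2-tensor: covd g K x b c a = K_{bc;a}.\<close>
definition covd :: "(real^'n \<Rightarrow> real^'n^'n) \<Rightarrow> (real^'n \<Rightarrow> real^'n^'n) \<Rightarrow> real^'n \<Rightarrow> 'n \<Rightarrow> 'n \<Rightarrow> 'n \<Rightarrow> real" where
  "covd g K x b c a = pd (\<lambda>y. K y $ b $ c) a x
     - (\<Sum>d\<in>UNIV. christoffel g x d a b * K x $ d $ c)
     - (\<Sum>d\<in>UNIV. christoffel g x d a c * K x $ b $ d)"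

text \<open>Mixed tensor K^a_b = g^{ac} K_{cb} (endomorphism via the metric), and its covariant
  derivative K^a_{b;c} = g^{ad} K_{db;c} (index raising commutes with nabla since nabla g = 0).\<close>
definition mixed :: "(real^'n \<Rightarrow> real^'n^'n) \<Rightarrow> (real^'n \<Rightarrow> real^'n^'n) \<Rightarrow> real^'n \<Rightarrow> 'n \<Rightarrow> 'n \<Rightarrow> real" where
  "mixed g K x a b = (\<Sum>c\<in>UNIV. ginv g x $ a $ c * K x $ c $ b)"

definition mixed_covd :: "(real^'n \<Rightarrow> real^'n^'n) \<Rightarrow> (real^'n \<Rightarrow> real^'n^'n) \<Rightarrow> real^'n \<Rightarrow> 'n \<Rightarrow> 'n \<Rightarrow> 'n \<Rightarrow> real" where
  "mixed_covd g K x a b c = (\<Sum>d\<in>UNIV. ginv g x $ a $ d * covd g K x d b c)"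

definition nijenhuis :: "(real^'n \<Rightarrow> real^'n^'n) \<Rightarrow> (real^'n \<Rightarrow> real^'n^'n) \<Rightarrow> real^'n \<Rightarrow> 'n \<Rightarrow> 'n \<Rightarrow> 'n \<Rightarrow> real" where
  "nijenhuis g K x a b c =
     (\<Sum>d\<in>UNIV. mixed g K x a d * ((mixed_covd g K x d b c - mixed_covd g K x d c b) / 2))
   + (\<Sum>d\<in>UNIV. (mixed g K x d b * mixed_covd g K x a c d - mixed g K x d c * mixed_covd g K x a b d) / 2)"

definition alt3 :: "('n \<Rightarrow> 'n \<Rightarrow> 'n \<Rightarrow> real) \<Rightarrow> 'n \<Rightarrow> 'n \<Rightarrow> 'n \<Rightarrow> real" where
  "alt3 T a b c = (T a b c + T b c a + T c a b - T b a c - T a c b - T c b a) / 6"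

definition nij_cond :: "(real^'n \<Rightarrow> real^'n^'n) \<Rightarrow> (real^'n \<Rightarrow> real^'n^'n) \<Rightarrow> real^'n \<Rightarrow> ('n \<Rightarrow> 'n \<Rightarrow> real) \<Rightarrow> bool" where
  "nij_cond g K x X \<longleftrightarrow> (\<forall>a b c. alt3 (\<lambda>a b c. \<Sum>d\<in>UNIV. nijenhuis g K x d b c * X a d) a b c = 0)"

definition pseudo_riemannian_on :: "(real^'n) set \<Rightarrow> (real^'n \<Rightarrow> real^'n^'n) \<Rightarrow> bool" where
  "pseudo_riemannian_on U g \<longleftrightarrow> open U \<and>
     (\<forall>x\<in>U. transpose (g x) = g x \<and> det (g x) \<noteq> 0 \<and> g differentiable (at x))"

definition killing_tensor_on :: "(real^'n) set \<Rightarrow> (real^'n \<Rightarrow> real^'n^'n) \<Rightarrow> (real^'n \<Rightarrow> real^'n^'n) \<Rightarrow> bool" where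
  "killing_tensor_on U g K \<longleftrightarrow>
     (\<forall>x\<in>U. transpose (K x) = K x \<and> K differentiable (at x) \<and>
        (\<forall>a b c. covd g K x b c a + covd g K x c a b + covd g K x a b c = 0))"

end

theory Submission
  imports Defs
begin


definition o1 :: "('n::finite \<Rightarrow> 'n \<Rightarrow> real) \<Rightarrow> ('n \<Rightarrow> 'n \<Rightarrow> 'n \<Rightarrow> real) \<Rightarrow> 'n \<Rightarrow> 'n \<Rightarrow> 'n \<Rightarrow> real" where
  "o1 A T = (\<lambda>a b c. \<Sum>f\<in>UNIV. A f a * T f b c)"
definition o2 :: "('n::finite \<Rightarrow> 'n \<Rightarrow> real) \<Rightarrow> ('n \<Rightarrow> 'n \<Rightarrow> 'n \<Rightarrow> real) \<Rightarrow> 'n \<Rightarrow> 'n \<Rightarrow> 'n \<Rightarrow> real" where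
  "o2 A T = (\<lambda>a b c. \<Sum>f\<in>UNIV. A f b * T a f c)"
definition o3 :: "('n::finite \<Rightarrow> 'n \<Rightarrow> real) \<Rightarrow> ('n \<Rightarrow> 'n \<Rightarrow> 'n \<Rightarrow> real) \<Rightarrow> 'n \<Rightarrow> 'n \<Rightarrow> 'n \<Rightarrow> real" where
  "o3 A T = (\<lambda>a b c. \<Sum>f\<in>UNIV. A f c * T a b f)"

definition E1 where "E1 A T = (\<lambda>a b c. o1 A T a b c + o2 A T a b c + o3 A T a b c)"

definition Tp where "Tp A p q r C = (o1 A ^^ p) ((o2 A ^^ q) ((o3 A ^^ r) C))"

lemma o12: "o1 B (o2 A X) = o2 A (o1 B X)"
  by (auto simp: o1_def o2_def fun_eq_iff sum_distrib_left mult.left_commute intro: sum.swap)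
lemma o13: "o1 B (o3 A X) = o3 A (o1 B X)"
  by (auto simp: o1_def o3_def fun_eq_iff sum_distrib_left mult.left_commute intro: sum.swap)
lemma o23: "o2 B (o3 A X) = o3 A (o2 B X)"
  by (auto simp: o2_def o3_def fun_eq_iff sum_distrib_left mult.left_commute intro: sum.swap)

lemma o2_pow1: "o2 A ((o1 B ^^ p) X) = (o1 B ^^ p) (o2 A X)"
  by (induction p) (auto simp: o12[symmetric])
lemma o3_pow1: "o3 A ((o1 B ^^ p) X) = (o1 B ^^ p) (o3 A X)"
  by (induction p) (auto simp: o13[symmetric])
lemma o3_pow2: "o3 A ((o2 B ^^ p) X) = (o2 B ^^ p) (o3 A X)"
  by (induction p) (auto simp: o23[symmetric])

lemma Tp_o1: "o1 A (Tp A p q r C) = Tp A (Suc p) q r C"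
  by (simp add: Tp_def)
lemma Tp_o2: "o2 A (Tp A p q r C) = Tp A p (Suc q) r C"
  by (simp add: Tp_def o2_pow1)
lemma Tp_o3: "o3 A (Tp A p q r C) = Tp A p q (Suc r) C"
  by (simp add: Tp_def o3_pow1 o3_pow2)

lemma o1_add: "o1 A (\<lambda>a b c. X a b c + Y a b c) = (\<lambda>a b c. o1 A X a b c + o1 A Y a b c)"
  by (simp add: o1_def fun_eq_iff sum.distrib distrib_left)
lemma o2_add: "o2 A (\<lambda>a b c. X a b c + Y a b c) = (\<lambda>a b c. o2 A X a b c + o2 A Y a b c)"
  by (simp add: o2_def fun_eq_iff sum.distrib distrib_left)
lemma o3_add: "o3 A (\<lambda>a b c. X a b c + Y a b c) = (\<lambda>a b c. o3 A X a b c + o3 A Y a b c)"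
  by (simp add: o3_def fun_eq_iff sum.distrib distrib_left)
lemma o1_diff: "o1 A (\<lambda>a b c. X a b c - Y a b c) = (\<lambda>a b c. o1 A X a b c - o1 A Y a b c)"
  by (simp add: o1_def fun_eq_iff sum_subtractf right_diff_distrib)
lemma o2_diff: "o2 A (\<lambda>a b c. X a b c - Y a b c) = (\<lambda>a b c. o2 A X a b c - o2 A Y a b c)"
  by (simp add: o2_def fun_eq_iff sum_subtractf right_diff_distrib)
lemma o3_diff: "o3 A (\<lambda>a b c. X a b c - Y a b c) = (\<lambda>a b c. o3 A X a b c - o3 A Y a b c)"
  by (simp add: o3_def fun_eq_iff sum_subtractf right_diff_distrib)
lemma o1_zero: "o1 A (\<lambda>a b c. 0) = (\<lambda>a b c. 0)" by (simp add: o1_def)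
lemma o2_zero: "o2 A (\<lambda>a b c. 0) = (\<lambda>a b c. 0)" by (simp add: o2_def)
lemma o3_zero: "o3 A (\<lambda>a b c. 0) = (\<lambda>a b c. 0)" by (simp add: o3_def)

lemma pow_add:
  fixes F :: "('n \<Rightarrow> 'n \<Rightarrow> 'n \<Rightarrow> real) \<Rightarrow> ('n \<Rightarrow> 'n \<Rightarrow> 'n \<Rightarrow> real)"
  assumes "\<And>X Y. F (\<lambda>a b c. X a b c + Y a b c) = (\<lambda>a b c. F X a b c + F Y a b c)"
  shows "(F ^^ p) (\<lambda>a b c. X a b c + Y a b c) = (\<lambda>a b c. (F ^^ p) X a b c + (F ^^ p) Y a b c)"
  by (induction p) (simp_all add: assms)

lemma Tp_add: "Tp A p q r (\<lambda>a b c. X a b c + Y a b c) = (\<lambda>a b c. Tp A p q r X a b c + Tp A p q r Y a b c)"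
  unfolding Tp_def by (simp add: pow_add o1_add o2_add o3_add)

lemma pow_zero:
  fixes F :: "('n \<Rightarrow> 'n \<Rightarrow> 'n \<Rightarrow> real) \<Rightarrow> ('n \<Rightarrow> 'n \<Rightarrow> 'n \<Rightarrow> real)"
  assumes "F (\<lambda>a b c. 0) = (\<lambda>a b c. 0)"
  shows "(F ^^ p) (\<lambda>a b c. 0) = (\<lambda>a b c. 0)"
  by (induction p) (simp_all add: assms)

lemma Tp_zero: "Tp A p q r (\<lambda>a b c. 0) = (\<lambda>a b c. 0)"
  unfolding Tp_def by (simp add: pow_zero o1_zero o2_zero o3_zero)

definition S12 :: "('n \<Rightarrow> 'n \<Rightarrow> 'n \<Rightarrow> real) \<Rightarrow> 'n \<Rightarrow> 'n \<Rightarrow> 'n \<Rightarrow> real" where "S12 T = (\<lambda>a b c. T b a c)"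
definition Cy :: "('n \<Rightarrow> 'n \<Rightarrow> 'n \<Rightarrow> real) \<Rightarrow> 'n \<Rightarrow> 'n \<Rightarrow> 'n \<Rightarrow> real" where "Cy T = (\<lambda>a b c. T b c a)"

lemma o1_S12: "o1 A (S12 X) = S12 (o2 A X)" by (simp add: o1_def o2_def S12_def)
lemma o2_S12: "o2 A (S12 X) = S12 (o1 A X)" by (simp add: o1_def o2_def S12_def)
lemma o3_S12: "o3 A (S12 X) = S12 (o3 A X)" by (simp add: o3_def S12_def)
lemma o1_Cy: "o1 A (Cy X) = Cy (o3 A X)" by (simp add: o1_def o3_def Cy_def)
lemma o2_Cy: "o2 A (Cy X) = Cy (o1 A X)" by (simp add: o1_def o2_def Cy_def)
lemma o3_Cy: "o3 A (Cy X) = Cy (o2 A X)" by (simp add: o2_def o3_def Cy_def)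

lemma pow_comm:
  fixes F G :: "('n \<Rightarrow> 'n \<Rightarrow> 'n \<Rightarrow> real) \<Rightarrow> ('n \<Rightarrow> 'n \<Rightarrow> 'n \<Rightarrow> real)"
  assumes "\<And>X. F (P X) = P (G X)"
  shows "(F ^^ p) (P X) = P ((G ^^ p) X)"
  by (induction p) (simp_all add: assms)

lemma pow_comm2:
  fixes F G :: "('n \<Rightarrow> 'n \<Rightarrow> 'n \<Rightarrow> real) \<Rightarrow> ('n \<Rightarrow> 'n \<Rightarrow> 'n \<Rightarrow> real)"
  assumes "\<And>X. F (G X) = G (F X)"
  shows "(F ^^ p) ((G ^^ q) X) = (G ^^ q) ((F ^^ p) X)"
proof -
  have "\<And>Y. (F ^^ p) (G Y) = G ((F ^^ p) Y)" by (rule pow_comm) (simp add: assms)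
  then show ?thesis by (induction q) simp_all
qed

lemma Tp_S12: "Tp A p q r (S12 X) = S12 (Tp A q p r X)"
proof -
  have "Tp A p q r (S12 X) = S12 ((o2 A ^^ p) ((o1 A ^^ q) ((o3 A ^^ r) X)))"
    unfolding Tp_def
    by (simp add: pow_comm[where F="o3 A" and G="o3 A" and P=S12, OF o3_S12]
         pow_comm[where F="o2 A" and G="o1 A" and P=S12, OF o2_S12] pow_comm[where F="o1 A" and G="o2 A" and P=S12, OF o1_S12])
  also have "(o2 A ^^ p) ((o1 A ^^ q) Y) = (o1 A ^^ q) ((o2 A ^^ p) Y)" for Y
    by (rule pow_comm2) (simp add: o12)
  finally show ?thesis unfolding Tp_def by simp
qed

lemma Tp_Cy: "Tp A p q r (Cy X) = Cy (Tp A q r p X)"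
proof -
  have "Tp A p q r (Cy X) = Cy ((o3 A ^^ p) ((o1 A ^^ q) ((o2 A ^^ r) X)))"
    unfolding Tp_def
    by (simp add: pow_comm[where F="o3 A" and G="o2 A" and P=Cy, OF o3_Cy]
         pow_comm[where F="o2 A" and G="o1 A" and P=Cy, OF o2_Cy] pow_comm[where F="o1 A" and G="o3 A" and P=Cy, OF o1_Cy])
  also have "(o3 A ^^ p) ((o1 A ^^ q) ((o2 A ^^ r) X)) = (o1 A ^^ q) ((o2 A ^^ r) ((o3 A ^^ p) X))"
  proof -
    have "(o3 A ^^ p) ((o1 A ^^ q) Y) = (o1 A ^^ q) ((o3 A ^^ p) Y)" for Y
      by (rule pow_comm2) (simp add: o13)
    moreover have "(o3 A ^^ p) ((o2 A ^^ r) Y) = (o2 A ^^ r) ((o3 A ^^ p) Y)" for Y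
      by (rule pow_comm2) (simp add: o23)
    ultimately show ?thesis by simp
  qed
  finally show ?thesis unfolding Tp_def by simp
qed

lemma alt3_E1: "alt3 (E1 B X) a b c = E1 B (\<lambda>a b c. alt3 X a b c) a b c"
  unfolding alt3_def E1_def o1_def o2_def o3_def
  apply (simp only: times_divide_eq_right distrib_left right_diff_distrib)
  apply (simp only: sum_divide_distrib[symmetric] sum.distrib sum_subtractf)
  apply (simp add: field_simps)
  done


lemma alt3_add: "alt3 (\<lambda>a b c. X a b c + Y a b c) a b c = alt3 X a b c + alt3 Y a b c"
  by (simp add: alt3_def field_simps)
lemma alt3_diff: "alt3 (\<lambda>a b c. X a b c - Y a b c) a b c = alt3 X a b c - alt3 Y a b c"
  by (simp add: alt3_def field_simps)

lemma E1_add: "E1 B (\<lambda>a b c. X a b c + Y a b c) = (\<lambda>a b c. E1 B X a b c + E1 B Y a b c)"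
  by (simp add: E1_def o1_add o2_add o3_add fun_eq_iff)
lemma E1_diff: "E1 B (\<lambda>a b c. X a b c - Y a b c) = (\<lambda>a b c. E1 B X a b c - E1 B Y a b c)"
  by (simp add: E1_def o1_diff o2_diff o3_diff fun_eq_iff)

lemma E1_zero: "(\<forall>a b c. alt3 X a b c = 0) \<Longrightarrow> alt3 (E1 B X) a b c = 0"
  by (subst alt3_E1) (simp add: E1_def o1_def o2_def o3_def)

lemma E1_Tp: "E1 A (Tp A p q r C) = (\<lambda>a b c. Tp A (Suc p) q r C a b c + Tp A p (Suc q) r C a b c + Tp A p q (Suc r) C a b c)"
  by (simp add: E1_def Tp_o1 Tp_o2 Tp_o3)

definition sq :: "('n::finite \<Rightarrow> 'n \<Rightarrow> real) \<Rightarrow> 'n \<Rightarrow> 'n \<Rightarrow> real" where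
  "sq A = (\<lambda>e a. \<Sum>f\<in>UNIV. A e f * A f a)"

lemma o1_sq: "o1 (sq A) X = o1 A (o1 A X)"
  unfolding o1_def sq_def fun_eq_iff
  by (simp add: sum_distrib_left sum_distrib_right, subst sum.swap, simp add: mult_ac)
lemma o2_sq: "o2 (sq A) X = o2 A (o2 A X)"
  unfolding o2_def sq_def fun_eq_iff
  by (simp add: sum_distrib_left sum_distrib_right, subst sum.swap, simp add: mult_ac)
lemma o3_sq: "o3 (sq A) X = o3 A (o3 A X)"
  unfolding o3_def sq_def fun_eq_iff
  by (simp add: sum_distrib_left sum_distrib_right, subst sum.swap, simp add: mult_ac)

lemma E1_sq_Tp: "E1 (sq A) (Tp A p q r C) = (\<lambda>a b c. Tp A (Suc (Suc p)) q r C a b c + Tp A p (Suc (Suc q)) r C a b c + Tp A p q (Suc (Suc r)) C a b c)"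
  by (simp add: E1_def o1_sq o2_sq o3_sq Tp_o1 Tp_o2 Tp_o3)

lemma br_anti:
  assumes "S12 C = C"
  shows "alt3 (Tp A p q r C) a b c = - alt3 (Tp A q p r C) a b c"
proof -
  have "Tp A p q r C = S12 (Tp A q p r C)" using Tp_S12[of A p q r C] assms by simp
  then show ?thesis by (simp add: alt3_def S12_def field_simps)
qed

lemma br_cyc:
  assumes "\<forall>a b c. C a b c + C b c a + C c a b = 0"
  shows "alt3 (Tp A p q r C) a b c + alt3 (Tp A q r p C) a b c + alt3 (Tp A r p q C) a b c = 0"
proof -
  have z: "(\<lambda>a b c. C a b c + Cy C a b c + Cy (Cy C) a b c) = (\<lambda>a b c. 0)"
    using assms by (simp add: Cy_def fun_eq_iff)
  have "Tp A p q r (\<lambda>a b c. C a b c + Cy C a b c + Cy (Cy C) a b c) = (\<lambda>a b c. 0)"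
    by (simp only: z Tp_zero)
  then have X: "\<And>x y z. Tp A p q r C x y z + Tp A q r p C y z x + Tp A r p q C z x y = 0"
    by (simp only: Tp_add Tp_Cy) (simp add: fun_eq_iff Cy_def)
  show ?thesis unfolding alt3_def
    using X[of a b c] X[of b c a] X[of c a b] X[of b a c] X[of a c b] X[of c b a] apply (simp add: field_simps) done
qed

lemma core:
  fixes A :: "'n::finite \<Rightarrow> 'n \<Rightarrow> real"
  assumes sym: "S12 C = C" and cyc: "\<forall>a b c. C a b c + C b c a + C c a b = 0"
    and h0: "\<forall>a b c. alt3 (Tp A (Suc 0) 0 0 C) a b c = alt3 (Tp A 0 0 (Suc 0) C) a b c"
    and h1: "\<forall>a b c. alt3 (Tp A (Suc (Suc 0)) 0 0 C) a b c = alt3 (Tp A (Suc 0) 0 (Suc 0) C) a b c"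
  shows "alt3 (Tp A (Suc (Suc (Suc 0))) 0 0 C) a b c = alt3 (Tp A (Suc (Suc 0)) 0 (Suc 0) C) a b c"
proof -
  note anti = br_anti[OF sym, of A]
  have f1: "\<forall>a b c. alt3 (Tp A (Suc 0) 0 0 C) a b c = 0"
    using h0 anti[of 0 0 "Suc 0"] by auto
  have F4: "alt3 (E1 A (E1 A (Tp A (Suc 0) 0 0 C))) a b c = 0"
    by (rule E1_zero, intro allI, rule E1_zero, rule f1)
  have f2: "\<forall>a b c. alt3 (\<lambda>a b c. Tp A (Suc (Suc 0)) 0 0 C a b c - Tp A (Suc 0) 0 (Suc 0) C a b c) a b c = 0"
    using h1 by (simp add: alt3_diff)
  have F6: "alt3 (E1 A (\<lambda>a b c. Tp A (Suc (Suc 0)) 0 0 C a b c - Tp A (Suc 0) 0 (Suc 0) C a b c)) a b c = 0"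
    by (rule E1_zero, rule f2)
  have G: "alt3 (E1 (sq A) (Tp A (Suc 0) 0 0 C)) a b c = 0"
    by (rule E1_zero, rule f1)
  note F4' = F4[simplified E1_Tp E1_add alt3_add]
  note F6' = F6[simplified E1_Tp E1_add E1_diff alt3_add alt3_diff]
  note G' = G[simplified E1_sq_Tp alt3_add]
  have c1: "alt3 (Tp A (Suc (Suc 0)) (Suc 0) 0 C) a b c + alt3 (Tp A (Suc 0) 0 (Suc (Suc 0)) C) a b c + alt3 (Tp A 0 (Suc (Suc 0)) (Suc 0) C) a b c = 0"
    by (rule br_cyc[OF cyc])
  show ?thesis
    using F4' F6' G' c1 anti[of "Suc 0" "Suc 0" "Suc 0" a b c] anti[of "Suc 0" "Suc 0" 0 a b c]
      anti[of "Suc 0" "Suc (Suc 0)" 0 a b c] anti[of 0 "Suc (Suc 0)" "Suc 0" a b c] anti[of 0 "Suc 0" "Suc (Suc 0)" a b c]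
    by linarith
qed



lemma mmult_nth: "((P::real^'n^'n) ** Q) $ i $ j = (\<Sum>k\<in>UNIV. P$i$k * Q$k$j)"
  by (simp add: matrix_matrix_mult_def)
lemma mvmult_nth: "((P::real^'n^'n) *v v) $ i = (\<Sum>k\<in>UNIV. P$i$k * v$k)"
  by (simp add: matrix_vector_mult_def)
lemma transpose_nth: "transpose (P::real^'n^'n) $ i $ j = P $ j $ i"
  by (simp add: Finite_Cartesian_Product.transpose_def)
lemma mat1_nth: "(mat 1 :: real^'n^'n) $ i $ j = (if i = j then 1 else 0)"
  by (simp add: mat_def)

lemma inv_facts:
  fixes G :: "real^'n^'n"
  assumes "det G \<noteq> 0" "transpose G = G"
  shows "G ** matrix_inv G = mat 1" "matrix_inv G ** G = mat 1" "transpose (matrix_inv G) = matrix_inv G"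
proof -
  have "invertible G" using assms invertible_det_nz by blast
  then have "\<exists>A'. G ** A' = mat 1 \<and> A' ** G = mat 1" unfolding invertible_def .
  then have *: "G ** matrix_inv G = mat 1 \<and> matrix_inv G ** G = mat 1"
    unfolding matrix_inv_def by (rule someI_ex)
  then show "G ** matrix_inv G = mat 1" "matrix_inv G ** G = mat 1" by auto
  have "transpose (matrix_inv G) ** G = mat 1"
    using * assms(2) by (metis matrix_transpose_mul transpose_mat)
  then have "transpose (matrix_inv G) = transpose (matrix_inv G) ** (G ** matrix_inv G)"
    using * by simp
  also have "\<dots> = matrix_inv G" using \<open>transpose (matrix_inv G) ** G = mat 1\<close>
    by (simp add: matrix_mul_assoc)
  finally show "transpose (matrix_inv G) = matrix_inv G" .
qed

definition Nlk where
  "Nlk A C k = (\<lambda>e b c. (Tp A (Suc k) 0 0 C e b c - Tp A (Suc k) 0 0 C e c b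
        + Tp A k 0 (Suc 0) C e c b - Tp A k 0 (Suc 0) C e b c) / 2)"

lemma Tp_Suc_nth: "Tp A (Suc p) q r C x y z = (\<Sum>f\<in>UNIV. A f x * Tp A p q r C f y z)"
  using Tp_o1[of A p q r C, symmetric] by (simp add: o1_def)

lemma o1_Nlk: "o1 A (Nlk A C k) = Nlk A C (Suc k)"
  unfolding Nlk_def o1_def fun_eq_iff Tp_Suc_nth[of A "Suc k"] Tp_Suc_nth[of A k]
  by (simp add: sum_subtractf sum.distrib sum_divide_distrib[symmetric] ring_distribs)

lemma alt3_Nlk: "alt3 (Nlk A C k) a b c = alt3 (Tp A (Suc k) 0 0 C) a b c - alt3 (Tp A k 0 (Suc 0) C) a b c"
  unfolding Nlk_def alt3_def by (simp add: field_simps)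


lemma N_eq:
  fixes g K :: "real^'n \<Rightarrow> real^'n^'n"
  assumes Hsym: "transpose (ginv g x) = ginv g x" and Ksym: "transpose (K x) = K x"
  shows "nijenhuis g K x d b c = (\<Sum>e\<in>UNIV. ginv g x $ d $ e * Nlk (mixed g K x) (covd g K x) 0 e b c)"
proof -
  define H where "H = ginv g x"
  define M where "M = H ** K x"
  define C where "C = covd g K x"
  define A where "A = mixed g K x"
  define Dv where "Dv = (\<chi> f. C f b c - C f c b)"
  have mix: "\<And>i j. A i j = M$i$j" by (simp add: A_def mixed_def M_def H_def mmult_nth)
  have tM: "transpose M = K x ** H" using Hsym Ksym by (simp add: M_def H_def matrix_transpose_mul)
  have T1: "(\<Sum>d'\<in>UNIV. A d d' * ((mixed_covd g K x d' b c - mixed_covd g K x d' c b) / 2))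
        = ((M ** H) *v Dv) $ d / 2"
    unfolding matrix_vector_mul_assoc[symmetric]
    by (simp add: mvmult_nth mix mixed_covd_def Dv_def H_def C_def sum_distrib_left sum_subtractf
        right_diff_distrib sum_divide_distrib diff_divide_distrib)
  have T2: "(\<Sum>d'\<in>UNIV. (A d' b * mixed_covd g K x d c d' - A d' c * mixed_covd g K x d b d') / 2)
        = (\<Sum>e\<in>UNIV. H $ d $ e * ((\<Sum>f\<in>UNIV. A f b * C e c f - A f c * C e b f) / 2))"
  proof -
    have "(\<Sum>d'\<in>UNIV. (A d' b * mixed_covd g K x d c d' - A d' c * mixed_covd g K x d b d') / 2)
      = (\<Sum>d'\<in>UNIV. \<Sum>e\<in>UNIV. H $ d $ e * (A d' b * C e c d' - A d' c * C e b d') / 2)"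
      unfolding mixed_covd_def H_def C_def
      by (simp add: sum_distrib_left sum_subtractf right_diff_distrib diff_divide_distrib sum_divide_distrib mult_ac)
    also have "\<dots> = (\<Sum>e\<in>UNIV. \<Sum>d'\<in>UNIV. H $ d $ e * (A d' b * C e c d' - A d' c * C e b d') / 2)"
      by (rule sum.swap)
    also have "\<dots> = (\<Sum>e\<in>UNIV. H $ d $ e * ((\<Sum>f\<in>UNIV. A f b * C e c f - A f c * C e b f) / 2))"
      by (simp add: sum_distrib_left sum_divide_distrib)
    finally show ?thesis .
  qed
  have Nl: "Nlk A C 0 e b c = ((transpose M *v Dv) $ e + (\<Sum>f\<in>UNIV. A f b * C e c f - A f c * C e b f)) / 2" for e
    by (simp only: mvmult_nth transpose_nth)
      (simp add: Nlk_def Tp_def o1_def o3_def mix Dv_def sum_subtractf right_diff_distrib algebra_simps)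
  have R: "(\<Sum>e\<in>UNIV. H $ d $ e * Nlk A C 0 e b c)
      = (H *v (transpose M *v Dv)) $ d / 2 + (\<Sum>e\<in>UNIV. H $ d $ e * ((\<Sum>f\<in>UNIV. A f b * C e c f - A f c * C e b f) / 2))"
    unfolding Nl by (simp add: mvmult_nth distrib_left add_divide_distrib sum.distrib sum_divide_distrib)
  have "H ** transpose M = M ** H" unfolding tM by (simp add: M_def matrix_mul_assoc)
  then have "(H *v (transpose M *v Dv)) = (M ** H) *v Dv" by (simp only: matrix_vector_mul_assoc)
  then show ?thesis
    using R T1 T2 unfolding nijenhuis_def
    by (simp add: A_def C_def H_def sum.distrib add_divide_distrib)
qed


lemma cond_arr:
  fixes g K :: "real^'n \<Rightarrow> real^'n^'n"
  assumes Hsym: "transpose (ginv g x) = ginv g x" and Ksym: "transpose (K x) = K x"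
  shows "(\<Sum>d\<in>UNIV. nijenhuis g K x d b c * X a d)
     = (\<Sum>e\<in>UNIV. (\<Sum>d\<in>UNIV. X a d * ginv g x $ d $ e) * Nlk (mixed g K x) (covd g K x) 0 e b c)"
  unfolding N_eq[where g=g and K=K and x=x, OF assms]
  apply (simp add: sum_distrib_right sum_distrib_left)
  apply (subst sum.swap)
  apply (simp add: mult_ac)
  done

lemma covd_sym:
  fixes g K :: "real^'n \<Rightarrow> real^'n^'n"
  assumes "open U" "x \<in> U" "\<forall>y\<in>U. transpose (K y) = K y"
  shows "covd g K x a b c = covd g K x b a c"
proof -
  have eqf: "\<And>y. y \<in> U \<Longrightarrow> K y $ a $ b = K y $ b $ a"
    using assms(3) by (metis transpose_nth)
  have "\<And>D. ((\<lambda>y. K y $ a $ b) has_derivative D) (at x) = ((\<lambda>y. K y $ b $ a) has_derivative D) (at x)"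
  proof
    fix D assume "((\<lambda>y. K y $ a $ b) has_derivative D) (at x)"
    then show "((\<lambda>y. K y $ b $ a) has_derivative D) (at x)"
      by (rule has_derivative_transform_within_open[OF _ assms(1,2)]) (simp add: eqf)
  next
    fix D assume "((\<lambda>y. K y $ b $ a) has_derivative D) (at x)"
    then show "((\<lambda>y. K y $ a $ b) has_derivative D) (at x)"
      by (rule has_derivative_transform_within_open[OF _ assms(1,2)]) (simp add: eqf)
  qed
  then have pdeq: "pd (\<lambda>y. K y $ a $ b) c x = pd (\<lambda>y. K y $ b $ a) c x"
    unfolding pd_def frechet_derivative_def by simp
  have Kx: "\<And>i j. K x $ i $ j = K x $ j $ i" using eqf assms(2) by (metis assms(3) transpose_nth)
  show ?thesis unfolding covd_def pdeq using Kx
    by (simp add: algebra_simps)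
qed


theorem theorem1:
  fixes U :: "(real^'n) set" and g K :: "real^'n \<Rightarrow> real^'n^'n"
  assumes "pseudo_riemannian_on U g"
    and "killing_tensor_on U g K"
    and "\<forall>x\<in>U. nij_cond g K x (\<lambda>a d. g x $ a $ d)"
    and "\<forall>x\<in>U. nij_cond g K x (\<lambda>a d. K x $ a $ d)"
  shows "\<forall>x\<in>U. nij_cond g K x (\<lambda>a d. \<Sum>e\<in>UNIV. K x $ a $ e * mixed g K x e d)"
proof
  fix x assume xU: "x \<in> U"
  have opn: "open U" and Gs: "transpose (g x) = g x" and Gd: "det (g x) \<noteq> 0"
    using assms(1) xU unfolding pseudo_riemannian_on_def by auto
  have Ks: "\<forall>y\<in>U. transpose (K y) = K y" using assms(2) unfolding killing_tensor_on_def by auto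
  have kil: "\<forall>a b c. covd g K x b c a + covd g K x c a b + covd g K x a b c = 0"
    using assms(2) xU unfolding killing_tensor_on_def by auto
  define H where "H = ginv g x"
  define M where "M = H ** K x"
  define A where "A = mixed g K x"
  define C where "C = covd g K x"
  have Hs: "transpose H = H" and GH: "g x ** H = mat 1"
    using inv_facts[OF Gd Gs] by (simp_all add: H_def ginv_def)
  have Kxs: "transpose (K x) = K x" using Ks xU by auto
  have mix: "\<And>i j. A i j = M$i$j" by (simp add: A_def mixed_def M_def H_def mmult_nth)
  have tM: "transpose M = K x ** H" using Hs Kxs by (simp add: M_def matrix_transpose_mul)
  note ca = cond_arr[where g=g and K=K and x=x, OF Hs[unfolded H_def] Kxs, folded A_def C_def H_def]
  have arr0: "(\<lambda>a b c. \<Sum>d\<in>UNIV. nijenhuis g K x d b c * g x $ a $ d) = Nlk A C 0"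
  proof (intro ext)
    fix a b c
    have idd: "\<And>e. (\<Sum>d\<in>UNIV. g x $ a $ d * H $ d $ e) = (if a = e then 1 else 0)"
      using GH by (metis mmult_nth mat1_nth)
    show "(\<Sum>d\<in>UNIV. nijenhuis g K x d b c * g x $ a $ d) = Nlk A C 0 a b c"
      unfolding ca idd
    proof -
      have "\<And>e. (if a = e then 1 else 0) * Nlk A C 0 e b c = (if a = e then Nlk A C 0 e b c else 0)" by simp
      then show "(\<Sum>e\<in>UNIV. (if a = e then 1 else 0) * Nlk A C 0 e b c) = Nlk A C 0 a b c"
        by (simp add: sum.delta)
    qed
  qed
  have arr1: "(\<lambda>a b c. \<Sum>d\<in>UNIV. nijenhuis g K x d b c * K x $ a $ d) = Nlk A C (Suc 0)"
  proof (intro ext)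
    fix a b c
    have "\<And>e. (\<Sum>d\<in>UNIV. K x $ a $ d * H $ d $ e) = A e a"
      by (metis mix mmult_nth tM transpose_nth)
    then show "(\<Sum>d\<in>UNIV. nijenhuis g K x d b c * K x $ a $ d) = Nlk A C (Suc 0) a b c"
      unfolding ca o1_Nlk[symmetric] by (simp add: o1_def)
  qed
  have arr2: "(\<lambda>a b c. \<Sum>d\<in>UNIV. nijenhuis g K x d b c * (\<Sum>e\<in>UNIV. K x $ a $ e * mixed g K x e d))
      = Nlk A C (Suc (Suc 0))"
  proof (intro ext)
    fix a b c
    have "\<And>e. (\<Sum>d\<in>UNIV. (\<Sum>e\<in>UNIV. K x $ a $ e * mixed g K x e d) * H $ d $ e) = sq A e a"
    proof -
      fix e
      have "(\<Sum>d\<in>UNIV. (\<Sum>e\<in>UNIV. K x $ a $ e * mixed g K x e d) * H $ d $ e) = ((K x ** M) ** H) $ a $ e"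
        by (simp add: mmult_nth mix[symmetric] A_def)
      also have "(K x ** M) ** H = transpose (M ** M)"
        by (simp add: matrix_transpose_mul tM M_def matrix_mul_assoc Hs Kxs)
      also have "transpose (M ** M) $ a $ e = sq A e a"
        by (simp add: transpose_nth mmult_nth sq_def mix)
      finally show "?thesis e" .
    qed
    then show "(\<Sum>d\<in>UNIV. nijenhuis g K x d b c * (\<Sum>e\<in>UNIV. K x $ a $ e * mixed g K x e d)) = Nlk A C (Suc (Suc 0)) a b c"
      unfolding ca[where X="\<lambda>a d. \<Sum>e\<in>UNIV. K x $ a $ e * mixed g K x e d"] o1_Nlk[symmetric] o1_sq[symmetric]
      by (simp add: o1_def)
  qed
  have symC: "S12 C = C"
    using covd_sym[OF opn xU Ks] by (simp add: S12_def C_def fun_eq_iff)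
  have cycC: "\<forall>a b c. C a b c + C b c a + C c a b = 0"
  proof (intro allI)
    fix a b c show "C a b c + C b c a + C c a b = 0" using kil[rule_format, of c a b] by (simp add: C_def)
  qed
  have h0: "\<forall>a b c. alt3 (Tp A (Suc 0) 0 0 C) a b c = alt3 (Tp A 0 0 (Suc 0) C) a b c"
  proof -
    have c0: "nij_cond g K x (\<lambda>a d. g x $ a $ d)" using assms(3) xU by auto
    then show ?thesis unfolding nij_cond_def arr0 alt3_Nlk by auto
  qed
  have h1: "\<forall>a b c. alt3 (Tp A (Suc (Suc 0)) 0 0 C) a b c = alt3 (Tp A (Suc 0) 0 (Suc 0) C) a b c"
  proof -
    have c1: "nij_cond g K x (\<lambda>a d. K x $ a $ d)" using assms(4) xU by auto
    then show ?thesis unfolding nij_cond_def arr1 alt3_Nlk by auto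
  qed
  show "nij_cond g K x (\<lambda>a d. \<Sum>e\<in>UNIV. K x $ a $ e * mixed g K x e d)"
    unfolding nij_cond_def arr2 alt3_Nlk using core[OF symC cycC h0 h1] by simp
qed

end
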